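(* In the known-variance setup, let $a>2$ and $p'_g(r)=\frac{\Gamma(\frac{a+K}{2}-1)}{\Gamma(K/2)}\frac{a-2}{r}\big(\frac{Nr^2}{2}\big)^{K/2}U\big(\frac{a+K-2}{2};\frac K2;\frac{Nr^2}{2}\big)$ for $r>0$. Then $$\int_0^\infty p(\mathbf y\mid r)\,p'_g(r)\,dr=C_\sigma\,e^{-N\langle\mathbf z^2\rangle/2}\,\frac{a-2}{K+a-2}\;{}_1F_1\!\left(1;\frac{K+a}{2};\frac{N\hat b^2}{2}\right).$$
   Context: Known-variance setup: known $\sigma_1,\dots,\sigma_N>0$; $z_n=y_n/\sigma_n$; $\mathbb X\in\mathbb R^{N\times K}$ with entries $X_k(c_n)/\sigma_n$, full column rank. $\langle\mathbf z^2\rangle=\mathbf z^T\mathbf z/N$, $\mathbb H=\mathbb X^T\mathbb X/N=\mathbb S\mathbb L\mathbb S^T$, $\mathbf h=\mathbb X^T\mathbf z/N$, $\hat{\mathbf b}=\mathbb L^{1/2}\mathbb S^T\mathbb H^{-1}\mathbf h$, $\hat b^2=\|\hat{\mathbf b}\|^2$, $C_\sigma=\prod_n(2\pi\sigma_n^2)^{-1/2}$. Likelihood $p(\mathbf y\mid\mathbf b)=C_\sigma\exp[-\tfrac N2(\langle\mathbf z^2\rangle+\|\mathbf b\|^2-2\hat{\mathbf b}^T\mathbf b)]$; $p(\mathbf y\mid r)=\int p(\mathbf y\mid\mathbf b)d\mu_r(\mathbf b)$ with $\mu_r$ the uniform probability measure on the radius-$r$ sphere of $\mathbb R^K$. $U$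 is Tricomi's function; ${}_1F_1$ is Kummer's function. *)

theory Defs
  imports "HOL-Analysis.Analysis"
begin

definition kummer1F1 :: "real \<Rightarrow> real \<Rightarrow> real \<Rightarrow> real" where
  "kummer1F1 a b x = (\<Sum>n. pochhammer a n / pochhammer b n * x ^ n / fact n)"

text \<open>Tricomi's confluent hypergeometric function U(a;b;z), via its standard integral
  representation (valid for a > 0, z > 0, which is the range used below).\<close>
definition tricomiU :: "real \<Rightarrow> real \<Rightarrow> real \<Rightarrow> real" where
  "tricomiU a b z =
     (LBINT t:{0<..}. exp (- z * t) * t powr (a - 1) * (1 + t) powr (b - a - 1)) / Gamma a"

text \<open>Uniform probability measure on the sphere of radius r in a Euclidean space:
  image of the uniform measure on the unit ball under x \<mapsto> r x/|x| (cone measure).\<close>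
definition sphere_measure :: "real \<Rightarrow> 'a::euclidean_space measure" where
  "sphere_measure r = distr (uniform_measure lborel (ball 0 1)) borel (\<lambda>x. r *\<^sub>R sgn x)"

definition scaledX :: "real^'n \<Rightarrow> real^'k^'n \<Rightarrow> real^'k^'n" where
  "scaledX \<sigma> Xr = (\<chi> n k. Xr $ n $ k / \<sigma> $ n)"

definition scaledz :: "real^'n \<Rightarrow> real^'n \<Rightarrow> real^'n" where
  "scaledz \<sigma> y = (\<chi> n. y $ n / \<sigma> $ n)"

definition Hmat :: "real^'n \<Rightarrow> real^'k^'n \<Rightarrow> real^'k^'k" where
  "Hmat \<sigma> Xr = (1 / real CARD('n)) *\<^sub>R (transpose (scaledX \<sigma> Xr) ** scaledX \<sigma> Xr)"

definition hvec :: "real^'n \<Rightarrow> real^'n \<Rightarrow> real^'k^'n \<Rightarrow> real^'k" where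
  "hvec \<sigma> y Xr = (1 / real CARD('n)) *\<^sub>R (transpose (scaledX \<sigma> Xr) *v scaledz \<sigma> y)"

definition zsq_mean :: "real^'n \<Rightarrow> real^'n \<Rightarrow> real" where
  "zsq_mean \<sigma> y = (scaledz \<sigma> y \<bullet> scaledz \<sigma> y) / real CARD('n)"

definition diagm :: "real^'k \<Rightarrow> real^'k^'k" where
  "diagm l = (\<chi> i j. if i = j then l $ i else 0)"

definition bhat :: "real^'n \<Rightarrow> real^'n \<Rightarrow> real^'k^'n \<Rightarrow> real^'k^'k \<Rightarrow> real^'k \<Rightarrow> real^'k" where
  "bhat \<sigma> y Xr S l =
     (diagm (\<chi> i. sqrt (l $ i)) ** transpose S) *v (matrix_inv (Hmat \<sigma> Xr) *v hvec \<sigma> y Xr)"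

definition Csigma :: "real^'n \<Rightarrow> real" where
  "Csigma \<sigma> = (\<Prod>n\<in>UNIV. (2 * pi * (\<sigma> $ n)\<^sup>2) powr (- 1 / 2))"

definition lik :: "real^'n \<Rightarrow> real^'n \<Rightarrow> real^'k^'n \<Rightarrow> real^'k^'k \<Rightarrow> real^'k \<Rightarrow> real^'k \<Rightarrow> real" where
  "lik \<sigma> y Xr S l b = Csigma \<sigma> * exp (- (real CARD('n) / 2) *
     (zsq_mean \<sigma> y + (norm b)\<^sup>2 - 2 * (bhat \<sigma> y Xr S l \<bullet> b)))"

definition lik_r :: "real^'n \<Rightarrow> real^'n \<Rightarrow> real^'k^'n \<Rightarrow> real^'k^'k \<Rightarrow> real^'k \<Rightarrow> real \<Rightarrow> real" where
  "lik_r \<sigma> y Xr S l r = (\<integral>b. lik \<sigma> y Xr S l b \<partial>(sphere_measure r))"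

definition pg' :: "real \<Rightarrow> nat \<Rightarrow> nat \<Rightarrow> real \<Rightarrow> real" where
  "pg' a K N r = Gamma ((a + real K) / 2 - 1) / Gamma (real K / 2) * ((a - 2) / r)
     * (real N * r\<^sup>2 / 2) powr (real K / 2)
     * tricomiU ((a + real K - 2) / 2) (real K / 2) (real N * r\<^sup>2 / 2)"

end

theory Submission
  imports Defs
begin

lemma ball_sets_borel[measurable]: "ball (c::'a::euclidean_space) r \<in> sets borel" by simp

lemma lborel_pair_sets: "sets ((lborel::'a::euclidean_space measure) \<Otimes>\<^sub>M (lborel::'b::euclidean_space measure)) = sets (borel \<Otimes>\<^sub>M borel)"
  by (intro sets_pair_measure_cong sets_lborel)

lemma test_meas:
  fixes F :: "'a::euclidean_space \<Rightarrow> ennreal"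
  assumes [measurable]: "F \<in> borel_measurable borel"
  shows "(\<lambda>(\<rho>::real, x::'a). indicator {0<..} \<rho> * ennreal (q * \<rho> powr (q - 1)) * (indicator (ball 0 1) x * F (\<rho> powr (1/p) *\<^sub>R sgn x))) \<in> borel_measurable (lborel \<Otimes>\<^sub>M lborel)"
  unfolding measurable_cong_sets[OF lborel_pair_sets refl] by measurable

lemma FTC_tail:
  assumes "b > 0" "q > 0"
  shows "(\<integral>\<^sup>+\<sigma>. indicator {b<..} \<sigma> * ennreal (q * \<sigma> powr (-q-1)) \<partial>lborel) = ennreal (b powr (-q))"
proof -
  have "(\<integral>\<^sup>+\<sigma>. indicator {b<..} \<sigma> * ennreal (q * \<sigma> powr (-q-1)) \<partial>lborel) =
        (\<integral>\<^sup>+\<sigma>. ennreal (q * \<sigma> powr (-q-1)) * indicator {b..} \<sigma> \<partial>lborel)"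
    by (intro nn_integral_cong_AE eventually_mono[OF AE_lborel_singleton[of b]]) (auto simp: indicator_def)
  also have "\<dots> = ennreal (0 - (- (b powr (-q))))"
  proof (rule nn_integral_FTC_atLeast)
    show "\<And>x. b \<le> x \<Longrightarrow> ((\<lambda>x. - (x powr (-q))) has_real_derivative q * x powr (- q - 1)) (at x)"
      using assms by (auto intro!: derivative_eq_intros simp: field_simps)
    show "\<And>x. b \<le> x \<Longrightarrow> 0 \<le> q * x powr (- q - 1)" using assms by auto
    have "((\<lambda>x. x powr (-q)) \<longlongrightarrow> 0) at_top" using assms
      by (intro tendsto_neg_powr) (auto intro: filterlim_ident)
    then show "((\<lambda>x. - (x powr (-q))) \<longlongrightarrow> 0) at_top"
      using tendsto_minus by fastforce
  qed measurable
  also have "\<dots> = ennreal (b powr (-q))" by simp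
  finally show ?thesis .
qed

lemma lborel_swap:
  fixes f :: "'a::euclidean_space \<Rightarrow> 'b::euclidean_space \<Rightarrow> ennreal"
  assumes "(\<lambda>(x,y). f x y) \<in> borel_measurable (borel \<Otimes>\<^sub>M borel)"
  shows "(\<integral>\<^sup>+x. \<integral>\<^sup>+y. f x y \<partial>lborel \<partial>lborel) = (\<integral>\<^sup>+y. \<integral>\<^sup>+x. f x y \<partial>lborel \<partial>lborel)"
proof -
  have PS: "pair_sigma_finite (lborel::'a measure) (lborel::'b measure)"
    by (simp add: pair_sigma_finite_def sigma_finite_lborel)
  have "(\<lambda>(x,y). f x y) \<in> borel_measurable (lborel \<Otimes>\<^sub>M lborel)"
    unfolding measurable_cong_sets[OF lborel_pair_sets refl] by (rule assms)
  from pair_sigma_finite.Fubini'[OF PS this] show ?thesis by simp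
qed

lemma polar_A:
  fixes F :: "'a::euclidean_space \<Rightarrow> ennreal" and x :: 'a
  assumes [measurable]: "F \<in> borel_measurable borel" and p: "p > 0" and x: "x \<noteq> 0"
  defines "q \<equiv> real DIM('a) / p"
  shows "(\<integral>\<^sup>+\<rho>. indicator {0<..} \<rho> * ennreal (q * \<rho> powr (q - 1)) * F (\<rho> powr (1/p) *\<^sub>R sgn x) \<partial>lborel)
    = ennreal (norm x powr real DIM('a)) * (\<integral>\<^sup>+\<sigma>. indicator {0<..} \<sigma> * ennreal (q * \<sigma> powr (q - 1)) * F (\<sigma> powr (1/p) *\<^sub>R x) \<partial>lborel)"
proof -
  define c where "c = norm x powr p"
  have c: "c > 0" using x by (simp add: c_def)
  have q: "q > 0" using p by (simp add: q_def)
  let ?f = "\<lambda>\<rho>. indicator {0<..} \<rho> * ennreal (q * \<rho> powr (q - 1)) * F (\<rho> powr (1/p) *\<^sub>R sgn x)"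
  have "(\<integral>\<^sup>+\<rho>. ?f \<rho> \<partial>lborel) = ennreal \<bar>c\<bar> * (\<integral>\<^sup>+\<sigma>. ?f (0 + c * \<sigma>) \<partial>lborel)"
    by (rule nn_integral_real_affine) (use c in auto)
  also have "\<dots> = (\<integral>\<^sup>+\<sigma>. ennreal c * ?f (c * \<sigma>) \<partial>lborel)"
    using c by (subst nn_integral_cmult) auto
  also have "\<dots> = (\<integral>\<^sup>+\<sigma>. ennreal (norm x powr real DIM('a)) * (indicator {0<..} \<sigma> * ennreal (q * \<sigma> powr (q - 1)) * F (\<sigma> powr (1/p) *\<^sub>R x)) \<partial>lborel)"
  proof (intro nn_integral_cong)
    fix \<sigma> :: real
    show "ennreal c * ?f (c * \<sigma>) = ennreal (norm x powr real DIM('a)) * (indicator {0<..} \<sigma> * ennreal (q * \<sigma> powr (q - 1)) * F (\<sigma> powr (1/p) *\<^sub>R x))"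
    proof (cases "\<sigma> > 0")
      case True
      have e1: "(c * \<sigma>) powr (1/p) *\<^sub>R sgn x = \<sigma> powr (1/p) *\<^sub>R x"
        using True c p x by (simp add: c_def powr_mult powr_powr sgn_div_norm)
      have e2: "c * (q * (c * \<sigma>) powr (q - 1)) = norm x powr real DIM('a) * (q * \<sigma> powr (q - 1))"
      proof -
        have "(c * \<sigma>) powr (q - 1) = c powr (q - 1) * \<sigma> powr (q - 1)"
          using True c by (simp add: powr_mult)
        moreover have "c * c powr (q - 1) = c powr q" using c by (simp add: powr_diff)
        ultimately have "c * (c * \<sigma>) powr (q - 1) = c powr q * \<sigma> powr (q - 1)"
          by (metis mult.assoc)
        moreover have "c powr q = norm x powr real DIM('a)"
          using p by (simp add: c_def powr_powr q_def)
        ultimately show ?thesis by (simp add: algebra_simps)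
      qed
      have "ennreal c * ?f (c * \<sigma>) = ennreal (c * (q * (c * \<sigma>) powr (q - 1))) * F (\<sigma> powr (1/p) *\<^sub>R x)"
        using True c q e1 by (simp add: ennreal_mult' mult.assoc)
      also have "\<dots> = ennreal (norm x powr real DIM('a)) * (indicator {0<..} \<sigma> * ennreal (q * \<sigma> powr (q - 1)) * F (\<sigma> powr (1/p) *\<^sub>R x))"
        using True q by (simp add: e2 ennreal_mult' mult.assoc)
      finally show ?thesis .
    next
      case False
      then have "\<not> c * \<sigma> > 0" using c by (simp add: zero_less_mult_iff)
      with False show ?thesis by simp
    qed
  qed
  also have "\<dots> = ennreal (norm x powr real DIM('a)) * (\<integral>\<^sup>+\<sigma>. indicator {0<..} \<sigma> * ennreal (q * \<sigma> powr (q - 1)) * F (\<sigma> powr (1/p) *\<^sub>R x) \<partial>lborel)"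
    by (subst nn_integral_cmult) auto
  finally show ?thesis .
qed

lemma polar_B:
  fixes F :: "'a::euclidean_space \<Rightarrow> ennreal"
  assumes [measurable]: "F \<in> borel_measurable borel" and p: "p > 0" and \<sigma>: "\<sigma> > 0"
  defines "q \<equiv> real DIM('a) / p"
  shows "(\<integral>\<^sup>+x. indicator (ball 0 1) x * ennreal (norm x powr real DIM('a)) * F (\<sigma> powr (1/p) *\<^sub>R x) \<partial>lborel)
    = ennreal (\<sigma> powr (-2*q)) * (\<integral>\<^sup>+y. indicator {y. norm y powr p < \<sigma>} y * ennreal (norm y powr real DIM('a)) * F y \<partial>lborel)"
proof -
  define s where "s = \<sigma> powr (1/p)"
  have s: "s > 0" using \<sigma> by (simp add: s_def)
  let ?g = "\<lambda>x. indicator (ball 0 1) x * ennreal (norm x powr real DIM('a)) * F (s *\<^sub>R x)"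
  have "(\<integral>\<^sup>+x. ?g x \<partial>lborel) = (\<integral>\<^sup>+x. ?g x \<partial>density (distr lborel borel (\<lambda>x. 0 + (1/s) *\<^sub>R x)) (\<lambda>_. \<bar>1/s\<bar>^DIM('a)))"
    using lborel_affine[of "1/s" "0::'a"] s by simp
  also have "\<dots> = (\<integral>\<^sup>+y. ennreal (\<bar>1/s\<bar>^DIM('a)) * ?g ((1/s) *\<^sub>R y) \<partial>lborel)"
    by (subst nn_integral_density) (auto simp: nn_integral_distr)
  also have "\<dots> = (\<integral>\<^sup>+y. ennreal (\<sigma> powr (-2*q)) * (indicator {y. norm y powr p < \<sigma>} y * ennreal (norm y powr real DIM('a)) * F y) \<partial>lborel)"
  proof (intro nn_integral_cong)
    fix y :: 'a
    have i: "((1/s) *\<^sub>R y \<in> ball 0 1) \<longleftrightarrow> norm y powr p < \<sigma>"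
    proof -
      have "((1/s) *\<^sub>R y \<in> ball 0 1) \<longleftrightarrow> norm y < s" using s by (simp add: field_simps)
      also have "\<dots> \<longleftrightarrow> norm y powr p < s powr p" using s p
        by (meson powr_less_mono2 powr_mono2 not_less less_imp_le norm_ge_zero)
      also have "s powr p = \<sigma>" using p \<sigma> by (simp add: s_def powr_powr)
      finally show ?thesis .
    qed
    have n: "norm ((1/s) *\<^sub>R y) powr real DIM('a) = (1/s) powr real DIM('a) * norm y powr real DIM('a)"
      using s by (simp add: powr_divide)
    have k: "\<bar>1/s\<bar>^DIM('a) * ((1/s) powr real DIM('a)) = \<sigma> powr (-2*q)"
    proof -
      have "\<bar>1/s\<bar>^DIM('a) = (1/s) powr real DIM('a)" using s by (simp add: powr_realpow)
      moreover have "(1/s) powr real DIM('a) * (1/s) powr real DIM('a) = \<sigma> powr (-2*q)"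
        using s \<sigma> p by (simp add: s_def powr_powr q_def powr_add[symmetric] powr_divide powr_minus_divide)
      ultimately show ?thesis by simp
    qed
    show "ennreal (\<bar>1/s\<bar>^DIM('a)) * ?g ((1/s) *\<^sub>R y) = ennreal (\<sigma> powr (-2*q)) * (indicator {y. norm y powr p < \<sigma>} y * ennreal (norm y powr real DIM('a)) * F y)"
    proof -
      have g: "?g ((1/s) *\<^sub>R y) = indicator {y. norm y powr p < \<sigma>} y * ennreal ((1/s) powr real DIM('a) * norm y powr real DIM('a)) * F y"
        using s i by (simp add: indicator_def n[symmetric])
      have A: "ennreal (\<bar>1/s\<bar>^DIM('a)) * ennreal ((1/s) powr real DIM('a) * norm y powr real DIM('a))
          = ennreal (\<sigma> powr (-2*q)) * ennreal (norm y powr real DIM('a))"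
        by (subst ennreal_mult[symmetric], simp, simp, subst ennreal_mult[symmetric], simp, simp)
           (metis k mult.assoc)
      let ?i = "indicator {y. norm y powr p < \<sigma>} y :: ennreal"
      have "ennreal (\<bar>1/s\<bar>^DIM('a)) * (?i * ennreal ((1/s) powr real DIM('a) * norm y powr real DIM('a)) * F y)
         = (ennreal (\<bar>1/s\<bar>^DIM('a)) * ennreal ((1/s) powr real DIM('a) * norm y powr real DIM('a))) * (?i * F y)"
        by (simp only: mult_ac)
      also have "\<dots> = (ennreal (\<sigma> powr (-2*q)) * ennreal (norm y powr real DIM('a))) * (?i * F y)"
        by (simp only: A)
      also have "\<dots> = ennreal (\<sigma> powr (-2*q)) * (?i * ennreal (norm y powr real DIM('a)) * F y)"
        by (simp only: mult_ac)
      finally show ?thesis unfolding g .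
    qed
  qed
  also have "\<dots> = ennreal (\<sigma> powr (-2*q)) * (\<integral>\<^sup>+y. indicator {y. norm y powr p < \<sigma>} y * ennreal (norm y powr real DIM('a)) * F y \<partial>lborel)"
    by (subst nn_integral_cmult) auto
  finally show ?thesis by (simp add: s_def)
qed

lemma pred_greaterThan_mem[measurable (raw)]:
  fixes f g :: "'a \<Rightarrow> real"
  assumes [measurable]: "f \<in> borel_measurable M" "g \<in> borel_measurable M"
  shows "Measurable.pred M (\<lambda>x. f x \<in> {g x<..})"
  by simp

lemma polar:
  fixes F :: "'a::euclidean_space \<Rightarrow> ennreal"
  assumes Fm[measurable]: "F \<in> borel_measurable borel" and p: "p > 0"
  defines "q \<equiv> real DIM('a) / p"
  shows "(\<integral>\<^sup>+y. F y \<partial>lborel) = (\<integral>\<^sup>+\<rho>. indicator {0<..} \<rho> * ennreal (q * \<rho> powr (q - 1)) *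
            (\<integral>\<^sup>+x. indicator (ball 0 1) x * F (\<rho> powr (1/p) *\<^sub>R sgn x) \<partial>lborel) \<partial>lborel)"
proof -
  have q: "q > 0" using p by (simp add: q_def)
  let ?D = "real DIM('a)"
  have "(\<integral>\<^sup>+\<rho>. indicator {0<..} \<rho> * ennreal (q * \<rho> powr (q - 1)) *
            (\<integral>\<^sup>+x. indicator (ball 0 1) x * F (\<rho> powr (1/p) *\<^sub>R sgn x) \<partial>lborel) \<partial>lborel)
     = (\<integral>\<^sup>+\<rho>. \<integral>\<^sup>+x. indicator {0<..} \<rho> * ennreal (q * \<rho> powr (q - 1)) *
            (indicator (ball 0 1) x * F (\<rho> powr (1/p) *\<^sub>R sgn x)) \<partial>lborel \<partial>lborel)"
    by (intro nn_integral_cong nn_integral_cmult[symmetric]) measurable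
  also have "\<dots> = (\<integral>\<^sup>+x. \<integral>\<^sup>+\<rho>. indicator {0<..} \<rho> * ennreal (q * \<rho> powr (q - 1)) *
            (indicator (ball 0 1) x * F (\<rho> powr (1/p) *\<^sub>R sgn x)) \<partial>lborel \<partial>lborel)"
    by (rule lborel_swap) measurable
  also have "\<dots> = (\<integral>\<^sup>+x. indicator (ball 0 1) x * (\<integral>\<^sup>+\<rho>. indicator {0<..} \<rho> * ennreal (q * \<rho> powr (q - 1)) *
            F (\<rho> powr (1/p) *\<^sub>R sgn x) \<partial>lborel) \<partial>lborel)"
  proof (intro nn_integral_cong)
    fix x :: 'a
    have "(\<integral>\<^sup>+\<rho>. indicator {0<..} \<rho> * ennreal (q * \<rho> powr (q - 1)) *
            (indicator (ball 0 1) x * F (\<rho> powr (1/p) *\<^sub>R sgn x)) \<partial>lborel)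
        = (\<integral>\<^sup>+\<rho>. indicator (ball 0 1) x * (indicator {0<..} \<rho> * ennreal (q * \<rho> powr (q - 1)) *
            F (\<rho> powr (1/p) *\<^sub>R sgn x)) \<partial>lborel)"
      by (intro nn_integral_cong) (simp only: mult_ac)
    also have "\<dots> = indicator (ball 0 1) x * (\<integral>\<^sup>+\<rho>. indicator {0<..} \<rho> * ennreal (q * \<rho> powr (q - 1)) *
            F (\<rho> powr (1/p) *\<^sub>R sgn x) \<partial>lborel)"
      by (rule nn_integral_cmult) measurable
    finally show "(\<integral>\<^sup>+\<rho>. indicator {0<..} \<rho> * ennreal (q * \<rho> powr (q - 1)) *
            (indicator (ball 0 1) x * F (\<rho> powr (1/p) *\<^sub>R sgn x)) \<partial>lborel) = indicator (ball 0 1) x * (\<integral>\<^sup>+\<rho>. indicator {0<..} \<rho> * ennreal (q * \<rho> powr (q - 1)) *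
            F (\<rho> powr (1/p) *\<^sub>R sgn x) \<partial>lborel)" .
  qed
  also have "\<dots> = (\<integral>\<^sup>+x. indicator (ball 0 1) x * (ennreal (norm x powr ?D) * (\<integral>\<^sup>+\<sigma>. indicator {0<..} \<sigma> * ennreal (q * \<sigma> powr (q - 1)) *
            F (\<sigma> powr (1/p) *\<^sub>R x) \<partial>lborel)) \<partial>lborel)"
    by (intro nn_integral_cong_AE eventually_mono[OF AE_lborel_singleton[of 0]])
       (simp add: polar_A[OF Fm p, folded q_def])
  also have "\<dots> = (\<integral>\<^sup>+x. \<integral>\<^sup>+\<sigma>. (indicator {0<..} \<sigma> * ennreal (q * \<sigma> powr (q - 1))) *
            (indicator (ball 0 1) x * ennreal (norm x powr ?D) * F (\<sigma> powr (1/p) *\<^sub>R x)) \<partial>lborel \<partial>lborel)"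
  proof (intro nn_integral_cong)
    fix x :: 'a
    have "indicator (ball 0 1) x * (ennreal (norm x powr ?D) * (\<integral>\<^sup>+\<sigma>. indicator {0<..} \<sigma> * ennreal (q * \<sigma> powr (q - 1)) *
            F (\<sigma> powr (1/p) *\<^sub>R x) \<partial>lborel))
        = (indicator (ball 0 1) x * ennreal (norm x powr ?D)) * (\<integral>\<^sup>+\<sigma>. indicator {0<..} \<sigma> * ennreal (q * \<sigma> powr (q - 1)) *
            F (\<sigma> powr (1/p) *\<^sub>R x) \<partial>lborel)" by (simp only: mult_ac)
    also have "\<dots> = (\<integral>\<^sup>+\<sigma>. (indicator (ball 0 1) x * ennreal (norm x powr ?D)) * (indicator {0<..} \<sigma> * ennreal (q * \<sigma> powr (q - 1)) *
            F (\<sigma> powr (1/p) *\<^sub>R x)) \<partial>lborel)"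
      by (rule nn_integral_cmult[symmetric]) measurable
    also have "\<dots> = (\<integral>\<^sup>+\<sigma>. (indicator {0<..} \<sigma> * ennreal (q * \<sigma> powr (q - 1))) *
            (indicator (ball 0 1) x * ennreal (norm x powr ?D) * F (\<sigma> powr (1/p) *\<^sub>R x)) \<partial>lborel)"
      by (intro nn_integral_cong) (simp only: mult_ac)
    finally show "indicator (ball 0 1) x * (ennreal (norm x powr ?D) * (\<integral>\<^sup>+\<sigma>. indicator {0<..} \<sigma> * ennreal (q * \<sigma> powr (q - 1)) *
            F (\<sigma> powr (1/p) *\<^sub>R x) \<partial>lborel)) = (\<integral>\<^sup>+\<sigma>. (indicator {0<..} \<sigma> * ennreal (q * \<sigma> powr (q - 1))) *
            (indicator (ball 0 1) x * ennreal (norm x powr ?D) * F (\<sigma> powr (1/p) *\<^sub>R x)) \<partial>lborel)" .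
  qed
  also have "\<dots> = (\<integral>\<^sup>+\<sigma>. \<integral>\<^sup>+x. (indicator {0<..} \<sigma> * ennreal (q * \<sigma> powr (q - 1))) *
            (indicator (ball 0 1) x * ennreal (norm x powr ?D) * F (\<sigma> powr (1/p) *\<^sub>R x)) \<partial>lborel \<partial>lborel)"
    by (rule lborel_swap) measurable
  also have "\<dots> = (\<integral>\<^sup>+\<sigma>. (indicator {0<..} \<sigma> * ennreal (q * \<sigma> powr (q - 1))) * \<integral>\<^sup>+x.
            (indicator (ball 0 1) x * ennreal (norm x powr ?D) * F (\<sigma> powr (1/p) *\<^sub>R x)) \<partial>lborel \<partial>lborel)"
    by (intro nn_integral_cong nn_integral_cmult) measurable
  also have "\<dots> = (\<integral>\<^sup>+\<sigma>. \<integral>\<^sup>+y. (indicator {norm y powr p<..} \<sigma> * ennreal (q * \<sigma> powr (-q-1))) *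
            (ennreal (norm y powr ?D) * F y) \<partial>lborel \<partial>lborel)"
  proof (intro nn_integral_cong)
    fix \<sigma> :: real
    show "(indicator {0<..} \<sigma> * ennreal (q * \<sigma> powr (q - 1))) * (\<integral>\<^sup>+x.
            (indicator (ball 0 1) x * ennreal (norm x powr ?D) * F (\<sigma> powr (1/p) *\<^sub>R x)) \<partial>lborel)
          = (\<integral>\<^sup>+y. (indicator {norm y powr p<..} \<sigma> * ennreal (q * \<sigma> powr (-q-1))) *
            (ennreal (norm y powr ?D) * F y) \<partial>lborel)"
    proof (cases "\<sigma> > 0")
      case True
      have e: "q * \<sigma> powr (q - 1) * \<sigma> powr (- (2*q)) = q * \<sigma> powr (-q-1)"
        using True by (simp add: mult.assoc powr_add[symmetric])
      have "(indicator {0<..} \<sigma> * ennreal (q * \<sigma> powr (q - 1))) * (\<integral>\<^sup>+x.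
            (indicator (ball 0 1) x * ennreal (norm x powr ?D) * F (\<sigma> powr (1/p) *\<^sub>R x)) \<partial>lborel)
          = ennreal (q * \<sigma> powr (q - 1)) * (ennreal (\<sigma> powr (-2*q)) * (\<integral>\<^sup>+y. indicator {y. norm y powr p < \<sigma>} y * ennreal (norm y powr ?D) * F y \<partial>lborel))"
        using True by (simp add: polar_B[OF Fm p True, folded q_def])
      also have "\<dots> = ennreal (q * \<sigma> powr (-q-1)) * (\<integral>\<^sup>+y. indicator {y. norm y powr p < \<sigma>} y * ennreal (norm y powr ?D) * F y \<partial>lborel)"
        using True q by (simp add: mult.assoc[symmetric] ennreal_mult'[symmetric] e)
      also have "\<dots> = (\<integral>\<^sup>+y. ennreal (q * \<sigma> powr (-q-1)) * (indicator {y. norm y powr p < \<sigma>} y * ennreal (norm y powr ?D) * F y) \<partial>lborel)"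
        by (rule nn_integral_cmult[symmetric]) measurable
      also have "\<dots> = (\<integral>\<^sup>+y. (indicator {norm y powr p<..} \<sigma> * ennreal (q * \<sigma> powr (-q-1))) *
            (ennreal (norm y powr ?D) * F y) \<partial>lborel)"
        by (intro nn_integral_cong) (simp add: indicator_def mult_ac)
      finally show ?thesis .
    next
      case False
      then have "\<not> norm y powr p < \<sigma>" for y :: 'a by (meson le_less_trans not_le powr_ge_zero)
      with False show ?thesis by (simp add: indicator_def)
    qed
  qed
  also have "\<dots> = (\<integral>\<^sup>+y. \<integral>\<^sup>+\<sigma>. (indicator {norm y powr p<..} \<sigma> * ennreal (q * \<sigma> powr (-q-1))) *
            (ennreal (norm y powr ?D) * F y) \<partial>lborel \<partial>lborel)"
    by (rule lborel_swap) measurable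
  also have "\<dots> = (\<integral>\<^sup>+y. (\<integral>\<^sup>+\<sigma>. indicator {norm y powr p<..} \<sigma> * ennreal (q * \<sigma> powr (-q-1)) \<partial>lborel) *
            (ennreal (norm y powr ?D) * F y) \<partial>lborel)"
    by (intro nn_integral_cong nn_integral_multc) measurable
  also have "\<dots> = (\<integral>\<^sup>+y. F y \<partial>lborel)"
  proof (intro nn_integral_cong_AE eventually_mono[OF AE_lborel_singleton[of 0]])
    fix y :: 'a assume y: "y \<noteq> 0"
    have b: "norm y powr p > 0" using y by simp
    have e: "(norm y powr p) powr (-q) * norm y powr ?D = 1"
      using y p by (simp add: powr_powr q_def powr_add[symmetric])
    show "(\<integral>\<^sup>+\<sigma>. indicator {norm y powr p<..} \<sigma> * ennreal (q * \<sigma> powr (-q-1)) \<partial>lborel) *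
            (ennreal (norm y powr ?D) * F y) = F y"
      by (simp add: FTC_tail[OF b q] mult.assoc[symmetric] ennreal_mult'[symmetric] e)
  qed
  finally show ?thesis ..
qed

lemma ball_vol: "emeasure lborel (ball (0::'a::euclidean_space) 1) = ennreal (unit_ball_vol (real DIM('a)))"
  by (simp add: emeasure_ball)

lemma Z_val: "(\<integral>\<^sup>+y. ennreal (exp (- (norm (y::'a::euclidean_space) ^ 2))) \<partial>lborel)
   = ennreal (unit_ball_vol (real DIM('a)) * Gamma (real DIM('a)/2 + 1))"
proof -
  define q where "q = real DIM('a) / 2"
  define V where "V = unit_ball_vol (real DIM('a))"
  have q: "q > 0" by (simp add: q_def)
  have V: "V > 0" by (simp add: V_def)
  have "(\<integral>\<^sup>+y. ennreal (exp (- (norm (y::'a) ^ 2))) \<partial>lborel) =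
     (\<integral>\<^sup>+\<rho>. indicator {0<..} \<rho> * ennreal (q * \<rho> powr (q - 1)) *
            (\<integral>\<^sup>+x. indicator (ball 0 1) x * ennreal (exp (- (norm (\<rho> powr (1/2) *\<^sub>R sgn (x::'a)) ^ 2))) \<partial>lborel) \<partial>lborel)"
    using polar[of "\<lambda>y::'a. ennreal (exp (- (norm y ^ 2)))" 2] unfolding q_def by simp
  also have "\<dots> = (\<integral>\<^sup>+\<rho>. ennreal (q * V) * ennreal (indicator {0..} \<rho> * \<rho> powr (q - 1) / exp \<rho>) \<partial>lborel)"
  proof (intro nn_integral_cong_AE eventually_mono[OF AE_lborel_singleton[of 0]])
    fix \<rho> :: real assume "\<rho> \<noteq> 0"
    show "indicator {0<..} \<rho> * ennreal (q * \<rho> powr (q - 1)) *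
            (\<integral>\<^sup>+x. indicator (ball 0 1) x * ennreal (exp (- (norm (\<rho> powr (1/2) *\<^sub>R sgn (x::'a)) ^ 2))) \<partial>lborel)
        = ennreal (q * V) * ennreal (indicator {0..} \<rho> * \<rho> powr (q - 1) / exp \<rho>)"
    proof (cases "\<rho> > 0")
      case True
      have "(\<integral>\<^sup>+x. indicator (ball 0 1) x * ennreal (exp (- (norm (\<rho> powr (1/2) *\<^sub>R sgn (x::'a)) ^ 2))) \<partial>lborel)
          = (\<integral>\<^sup>+x. ennreal (exp (- \<rho>)) * indicator (ball 0 1) (x::'a) \<partial>lborel)"
      proof (intro nn_integral_cong_AE eventually_mono[OF AE_lborel_singleton[of 0]])
        fix x :: 'a assume "x \<noteq> 0"
        then have "norm (\<rho> powr (1/2) *\<^sub>R sgn x) ^ 2 = \<rho>"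
          using True by (simp add: norm_sgn powr_half_sqrt)
        then show "indicator (ball 0 1) x * ennreal (exp (- (norm (\<rho> powr (1/2) *\<^sub>R sgn x) ^ 2))) = ennreal (exp (- \<rho>)) * indicator (ball 0 1) x"
          by (simp add: mult.commute)
      qed
      also have "\<dots> = ennreal (exp (- \<rho>) * V)"
        by (simp add: nn_integral_cmult_indicator ball_vol V_def ennreal_mult)
      finally show ?thesis using True q V
        by (simp add: ennreal_mult'[symmetric] exp_minus field_simps)
    qed (use \<open>\<rho> \<noteq> 0\<close> in simp)
  qed
  also have "\<dots> = ennreal (q * V) * ennreal (Gamma q)"
    by (subst nn_integral_cmult) (auto simp: Gamma_conv_nn_integral_real[OF q])
  also have "\<dots> = ennreal (V * Gamma (q + 1))"
  proof -
    have G: "Gamma (q + 1) = q * Gamma q"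
      by (rule Gamma_plus1) (use q in \<open>auto dest: nonpos_Ints_nonpos\<close>)
    show ?thesis using q V by (simp add: ennreal_mult'[symmetric] G mult_ac)
  qed
  finally show ?thesis by (simp add: V_def q_def)
qed

lemma gauss:
  fixes c :: "'a::euclidean_space"
  assumes A: "A > 0"
  shows "(\<integral>\<^sup>+y. ennreal (exp (- A * norm y ^ 2 + c \<bullet> y)) \<partial>lborel)
     = ennreal (exp (norm c ^ 2 / (4*A)) * (1 / sqrt A) ^ DIM('a)) * (\<integral>\<^sup>+y. ennreal (exp (- (norm (y::'a) ^ 2))) \<partial>lborel)"
proof -
  define m where "m = (1 / (2*A)) *\<^sub>R c"
  have e: "- A * norm y ^ 2 + c \<bullet> y = norm c ^ 2 / (4*A) + (- A * norm (y - m) ^ 2)" for y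
    using A unfolding m_def power2_norm_eq_inner
    by (simp add: inner_diff_left inner_diff_right inner_commute algebra_simps power2_eq_square field_simps)
  have "(\<integral>\<^sup>+y. ennreal (exp (- A * norm y ^ 2 + c \<bullet> y)) \<partial>lborel)
      = (\<integral>\<^sup>+y. ennreal (exp (norm c ^ 2 / (4*A))) * ennreal (exp (- A * norm (y - m) ^ 2)) \<partial>lborel)"
    by (intro nn_integral_cong) (simp only: e exp_add ennreal_mult exp_ge_zero)
  also have "\<dots> = ennreal (exp (norm c ^ 2 / (4*A))) * (\<integral>\<^sup>+y. ennreal (exp (- A * norm (y - m) ^ 2)) \<partial>lborel)"
    by (rule nn_integral_cmult) measurable
  also have "(\<integral>\<^sup>+y. ennreal (exp (- A * norm (y - m) ^ 2)) \<partial>lborel)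
      = (\<integral>\<^sup>+y. ennreal (exp (- A * norm (y - m) ^ 2)) \<partial>distr lborel borel ((+) m))"
    by (simp add: lborel_distr_plus)
  also have "\<dots> = (\<integral>\<^sup>+y. ennreal (exp (- A * norm (y::'a) ^ 2)) \<partial>lborel)"
    by (subst nn_integral_distr) auto
  also have "\<dots> = (\<integral>\<^sup>+y. ennreal (exp (- A * norm (y::'a) ^ 2)) \<partial>density (distr lborel borel (\<lambda>x. 0 + (1 / sqrt A) *\<^sub>R x)) (\<lambda>_. \<bar>1 / sqrt A\<bar>^DIM('a)))"
    using A by (subst (1) lborel_affine[of "1 / sqrt A" "0::'a"]) auto
  also have "\<dots> = (\<integral>\<^sup>+y. ennreal ((1 / sqrt A)^DIM('a)) * ennreal (exp (- (norm (y::'a) ^ 2))) \<partial>lborel)"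
    using A by (subst nn_integral_density) (auto simp: nn_integral_distr power_divide)
  also have "\<dots> = ennreal ((1 / sqrt A)^DIM('a)) * (\<integral>\<^sup>+y. ennreal (exp (- (norm (y::'a) ^ 2))) \<partial>lborel)"
    by (rule nn_integral_cmult) measurable
  finally show ?thesis using A by (simp add: ennreal_mult mult.assoc)
qed

lemma gamma_scaled:
  assumes a: "a > 0" and l: "l > 0"
  shows "(\<integral>\<^sup>+t. indicator {0<..} t * ennreal (t powr (a-1) * exp (-l*t)) \<partial>lborel) = ennreal (Gamma a / l powr a)"
proof -
  let ?f = "\<lambda>t::real. indicator {0<..} t * ennreal (t powr (a-1) * exp (-l*t))"
  have "(\<integral>\<^sup>+t. ?f t \<partial>lborel) = ennreal \<bar>1/l\<bar> * (\<integral>\<^sup>+u. ?f (0 + (1/l) * u) \<partial>lborel)"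
    by (rule nn_integral_real_affine) (use l in auto)
  also have "\<dots> = (\<integral>\<^sup>+u. ennreal (1/l) * ?f (u/l) \<partial>lborel)"
    using l by (subst nn_integral_cmult) auto
  also have "\<dots> = (\<integral>\<^sup>+u. ennreal (l powr (-a)) * ennreal (indicator {0..} u * u powr (a - 1) / exp u) \<partial>lborel)"
  proof (intro nn_integral_cong_AE eventually_mono[OF AE_lborel_singleton[of 0]])
    fix u :: real assume "u \<noteq> 0"
    show "ennreal (1/l) * ?f (u/l) = ennreal (l powr (-a)) * ennreal (indicator {0..} u * u powr (a - 1) / exp u)"
    proof (cases "u > 0")
      case True
      have "1/l * ((u/l) powr (a-1) * exp (-l*(u/l))) = l powr (-a) * (u powr (a - 1) / exp u)"
        using True l by (simp add: powr_divide powr_diff powr_minus exp_minus field_simps)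
      then show ?thesis using True l by (simp add: ennreal_mult'[symmetric])
    qed (use \<open>u \<noteq> 0\<close> l in \<open>simp add: indicator_def field_simps\<close>)
  qed
  also have "\<dots> = ennreal (l powr (-a)) * ennreal (Gamma a)"
    by (subst nn_integral_cmult) (auto simp: Gamma_conv_nn_integral_real[OF a])
  also have "\<dots> = ennreal (Gamma a / l powr a)"
    using a l by (simp add: ennreal_mult'[symmetric] powr_minus field_simps)
  finally show ?thesis .
qed

lemma beta_half:
  assumes a: "a > 0" and c: "c > a"
  shows "(\<integral>\<^sup>+t. indicator {0<..} t * ennreal (t powr (a-1) * (1+t) powr (-c)) \<partial>lborel)
       = ennreal (Gamma a * Gamma (c - a) / Gamma c)"
proof -
  have c0: "c > 0" using a c by simp
  have Gc: "Gamma c > 0" using c0 by (simp add: Gamma_real_pos)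
  have "(\<integral>\<^sup>+t. indicator {0<..} t * ennreal (t powr (a-1) * (1+t) powr (-c)) \<partial>lborel)
      = (\<integral>\<^sup>+t. \<integral>\<^sup>+w. ennreal (1 / Gamma c) * (indicator {0<..} t * indicator {0<..} w *
            ennreal (t powr (a-1) * w powr (c-1) * exp (-w) * exp (-t*w))) \<partial>lborel \<partial>lborel)"
  proof (intro nn_integral_cong)
    fix t :: real
    show "indicator {0<..} t * ennreal (t powr (a-1) * (1+t) powr (-c))
       = (\<integral>\<^sup>+w. ennreal (1 / Gamma c) * (indicator {0<..} t * indicator {0<..} w *
            ennreal (t powr (a-1) * w powr (c-1) * exp (-w) * exp (-t*w))) \<partial>lborel)"
    proof (cases "t > 0")
      case True
      have "(\<integral>\<^sup>+w. ennreal (1 / Gamma c) * (indicator {0<..} t * indicator {0<..} w *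
            ennreal (t powr (a-1) * w powr (c-1) * exp (-w) * exp (-t*w))) \<partial>lborel)
          = (\<integral>\<^sup>+w. ennreal (t powr (a-1) / Gamma c) * (indicator {0<..} w * ennreal (w powr (c-1) * exp (-(1+t)*w))) \<partial>lborel)"
        using True Gc by (intro nn_integral_cong)
          (simp add: ennreal_mult'[symmetric] indicator_def algebra_simps exp_add[symmetric])
      also have "\<dots> = ennreal (t powr (a-1) / Gamma c) * ennreal (Gamma c / (1+t) powr c)"
        using True gamma_scaled[OF c0, of "1+t"] by (subst nn_integral_cmult) auto
      also have "\<dots> = indicator {0<..} t * ennreal (t powr (a-1) * (1+t) powr (-c))"
        using True Gc by (simp add: ennreal_mult'[symmetric] powr_minus field_simps)
      finally show ?thesis by simp
    qed simp
  qed
  also have "\<dots> = (\<integral>\<^sup>+w. \<integral>\<^sup>+t. ennreal (1 / Gamma c) * (indicator {0<..} t * indicator {0<..} w *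
            ennreal (t powr (a-1) * w powr (c-1) * exp (-w) * exp (-t*w))) \<partial>lborel \<partial>lborel)"
    by (rule lborel_swap) measurable
  also have "\<dots> = (\<integral>\<^sup>+w. ennreal (Gamma a / Gamma c) * (indicator {0<..} w * ennreal (w powr ((c - a) - 1) * exp (-1*w))) \<partial>lborel)"
  proof (intro nn_integral_cong)
    fix w :: real
    show "(\<integral>\<^sup>+t. ennreal (1 / Gamma c) * (indicator {0<..} t * indicator {0<..} w *
            ennreal (t powr (a-1) * w powr (c-1) * exp (-w) * exp (-t*w))) \<partial>lborel)
        = ennreal (Gamma a / Gamma c) * (indicator {0<..} w * ennreal (w powr ((c - a) - 1) * exp (-1*w)))"
    proof (cases "w > 0")
      case True
      have "(\<integral>\<^sup>+t. ennreal (1 / Gamma c) * (indicator {0<..} t * indicator {0<..} w *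
            ennreal (t powr (a-1) * w powr (c-1) * exp (-w) * exp (-t*w))) \<partial>lborel)
          = (\<integral>\<^sup>+t. ennreal (w powr (c-1) * exp (-w) / Gamma c) * (indicator {0<..} t * ennreal (t powr (a-1) * exp (-w*t))) \<partial>lborel)"
        using True Gc by (intro nn_integral_cong)
          (simp add: ennreal_mult'[symmetric] indicator_def algebra_simps)
      also have "\<dots> = ennreal (w powr (c-1) * exp (-w) / Gamma c) * ennreal (Gamma a / w powr a)"
        using True gamma_scaled[OF a, of w] by (subst nn_integral_cmult) auto
      also have "\<dots> = ennreal (Gamma a / Gamma c) * (indicator {0<..} w * ennreal (w powr ((c - a) - 1) * exp (-1*w)))"
        using True Gc a by (simp add: ennreal_mult'[symmetric] powr_diff field_simps Gamma_real_pos powr_add)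
      finally show ?thesis .
    qed simp
  qed
  also have "\<dots> = ennreal (Gamma a / Gamma c) * ennreal (Gamma (c - a) / 1 powr (c - a))"
    using gamma_scaled[of "c - a" 1] a c by (subst nn_integral_cmult) auto
  also have "\<dots> = ennreal (Gamma a * Gamma (c - a) / Gamma c)"
    using Gc a by (simp add: ennreal_mult'[symmetric] Gamma_real_pos)
  finally show ?thesis .
qed

lemma poch_ge_fact:
  assumes "b \<ge> (1::real)" shows "pochhammer b n \<ge> fact n"
proof -
  have "fact n = (\<Prod>i\<in>{0..<n}. 1 + real i)" by (simp add: pochhammer_fact pochhammer_prod)
  also have "\<dots> \<le> (\<Prod>i\<in>{0..<n}. b + real i)" using assms by (intro prod_mono) auto
  also have "\<dots> = pochhammer b n" by (simp add: pochhammer_prod)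
  finally show ?thesis .
qed

lemma kummer_summable:
  assumes b: "b \<ge> (1::real)" and x: "x \<ge> 0"
  shows "summable (\<lambda>n. x^n / pochhammer b n)"
proof (rule summable_comparison_test[OF _ summable_exp[of x]])
  show "\<exists>N. \<forall>n\<ge>N. norm (x ^ n / pochhammer b n) \<le> inverse (fact n) * x ^ n"
  proof (intro exI allI impI)
    fix n :: nat
    have p: "pochhammer b n \<ge> fact n" by (rule poch_ge_fact[OF b])
    have fp: "(fact n :: real) > 0" by simp
    have pp: "pochhammer b n > 0" using p fp by linarith
    have "norm (x ^ n / pochhammer b n) = x ^ n / pochhammer b n"
      using x pp by (simp add: abs_of_nonneg)
    also have "\<dots> \<le> x ^ n / fact n" using x p fp pp by (intro divide_left_mono) auto
    finally show "norm (x ^ n / pochhammer b n) \<le> inverse (fact n) * x ^ n" by (simp add: field_simps)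
  qed
qed

lemma kummer_eq: "kummer1F1 1 b x = (\<Sum>n. x^n / pochhammer b n)"
  unfolding kummer1F1_def by (simp add: pochhammer_fact[symmetric])

lemma t_integral:
  assumes a: "\<alpha> > 0" and x: "x \<ge> 0"
  shows "(\<integral>\<^sup>+t. indicator {0<..} t * ennreal (t powr (\<alpha>-1) * (1+t) powr (-(\<alpha>+1)) * exp (x/(1+t))) \<partial>lborel)
     = ennreal (kummer1F1 1 (\<alpha>+1) x / \<alpha>)"
proof -
  define g where "g m t = indicator {0<..} t * ennreal (x^m/fact m * (t powr (\<alpha>-1) * (1+t) powr (-(\<alpha>+1+real m))))" for m t
  have "(\<integral>\<^sup>+t. indicator {0<..} t * ennreal (t powr (\<alpha>-1) * (1+t) powr (-(\<alpha>+1)) * exp (x/(1+t))) \<partial>lborel)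
      = (\<integral>\<^sup>+t. (\<Sum>m. g m t) \<partial>lborel)"
  proof (intro nn_integral_cong)
    fix t :: real
    show "indicator {0<..} t * ennreal (t powr (\<alpha>-1) * (1+t) powr (-(\<alpha>+1)) * exp (x/(1+t))) = (\<Sum>m. g m t)"
    proof (cases "t > 0")
      case True
      define K where "K = t powr (\<alpha>-1) * (1+t) powr (-(\<alpha>+1))"
      have K: "K \<ge> 0" by (simp add: K_def)
      have "(\<lambda>m. K * ((x/(1+t))^m /\<^sub>R fact m)) sums (K * exp (x/(1+t)))"
        by (intro sums_mult exp_converges)
      moreover have "K * ((x/(1+t))^m /\<^sub>R fact m) = x^m/fact m * (t powr (\<alpha>-1) * (1+t) powr (-(\<alpha>+1+real m)))" for m
      proof -
        have e1: "(1+t) powr (-(\<alpha>+1+real m)) = (1+t) powr (-(\<alpha>+1)) * (1+t) powr (- real m)"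
          by (subst powr_add[symmetric]) (simp add: algebra_simps)
        have e2: "(1+t) powr (- real m) = 1/(1+t)^m"
          using True by (simp add: powr_minus powr_realpow divide_inverse)
        have "(1+t) powr (-(\<alpha>+1+real m)) = (1+t) powr (-(\<alpha>+1)) / (1+t)^m"
          unfolding e1 e2 by simp
        then show ?thesis using True by (simp add: K_def power_divide field_simps)
      qed
      ultimately have s: "(\<lambda>m. x^m/fact m * (t powr (\<alpha>-1) * (1+t) powr (-(\<alpha>+1+real m)))) sums (K * exp (x/(1+t)))"
        by simp
      have "(\<Sum>m. g m t) = (\<Sum>m. ennreal (x^m/fact m * (t powr (\<alpha>-1) * (1+t) powr (-(\<alpha>+1+real m)))))"
        using True by (simp add: g_def)
      also have "\<dots> = ennreal (K * exp (x/(1+t)))"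
        by (rule suminf_ennreal_eq[OF _ s]) (use x in simp)
      finally show ?thesis using True by (simp add: K_def)
    qed (simp add: g_def)
  qed
  also have "\<dots> = (\<Sum>m. integral\<^sup>N lborel (g m))"
    by (rule nn_integral_suminf) (simp add: g_def)
  also have "\<dots> = (\<Sum>m. ennreal (x^m / pochhammer (\<alpha>+1) m / \<alpha>))"
  proof (intro suminf_cong)
    fix m :: nat
    have c: "\<alpha> + 1 + real m > \<alpha>" by simp
    have "integral\<^sup>N lborel (g m) = (\<integral>\<^sup>+t. ennreal (x^m/fact m) * (indicator {0<..} t * ennreal (t powr (\<alpha>-1) * (1+t) powr (-(\<alpha>+1+real m)))) \<partial>lborel)"
    proof (intro nn_integral_cong)
      fix t :: real
      have "ennreal (x^m/fact m * (t powr (\<alpha>-1) * (1+t) powr (-(\<alpha>+1+real m))))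
          = ennreal (x^m/fact m) * ennreal (t powr (\<alpha>-1) * (1+t) powr (-(\<alpha>+1+real m)))"
        by (rule ennreal_mult) (use x in auto)
      then show "g m t = ennreal (x^m/fact m) * (indicator {0<..} t * ennreal (t powr (\<alpha>-1) * (1+t) powr (-(\<alpha>+1+real m))))"
        unfolding g_def by (simp only: mult_ac)
    qed
    also have "\<dots> = ennreal (x^m/fact m) * ennreal (Gamma \<alpha> * Gamma (\<alpha> + 1 + real m - \<alpha>) / Gamma (\<alpha> + 1 + real m))"
      by (subst nn_integral_cmult) (simp, simp only: beta_half[OF a c])
    also have "\<dots> = ennreal (x^m / pochhammer (\<alpha>+1) m / \<alpha>)"
    proof -
      have nz: "\<alpha> + 1 \<notin> \<int>\<^sub>\<le>\<^sub>0" using a by (auto dest: nonpos_Ints_nonpos)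
      have nz2: "\<alpha> \<notin> \<int>\<^sub>\<le>\<^sub>0" using a by (auto dest: nonpos_Ints_nonpos)
      have P: "pochhammer (\<alpha>+1) m = Gamma (\<alpha> + 1 + real m) / Gamma (\<alpha>+1)"
        using pochhammer_Gamma[OF nz] by simp
      have G1: "Gamma (\<alpha>+1) = \<alpha> * Gamma \<alpha>" using Gamma_plus1[OF nz2] .
      have F: "Gamma (\<alpha> + 1 + real m - \<alpha>) = fact m"
        using Gamma_fact[of m] by (simp add: add.commute)
      have pos: "Gamma \<alpha> > 0" "Gamma (\<alpha> + 1 + real m) > 0" using a by (auto intro!: Gamma_real_pos)
      have P': "Gamma (\<alpha> + 1 + real m) = pochhammer (\<alpha>+1) m * (\<alpha> * Gamma \<alpha>)"
      proof -
        have Y0: "Gamma (\<alpha>+1) > 0" using a by (intro Gamma_real_pos) simp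
        then have Y: "Gamma (\<alpha>+1) \<noteq> 0" by simp
        have "pochhammer (\<alpha>+1) m * Gamma (\<alpha>+1) = Gamma (\<alpha> + 1 + real m)"
          unfolding P using Y by simp
        then show ?thesis using G1 by simp
      qed
      have pp: "pochhammer (\<alpha>+1) m > 0" using a by (intro pochhammer_pos) simp
      have "x^m/fact m * (Gamma \<alpha> * Gamma (\<alpha> + 1 + real m - \<alpha>) / Gamma (\<alpha> + 1 + real m))
          = x^m/fact m * (Gamma \<alpha> * fact m / (pochhammer (\<alpha>+1) m * (\<alpha> * Gamma \<alpha>)))"
        by (simp only: F P')
      also have "\<dots> = x^m / pochhammer (\<alpha>+1) m / \<alpha>"
        using a pos pp by (simp add: field_simps less_imp_neq[symmetric])
      finally have "x^m/fact m * (Gamma \<alpha> * Gamma (\<alpha> + 1 + real m - \<alpha>) / Gamma (\<alpha> + 1 + real m))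
          = x^m / pochhammer (\<alpha>+1) m / \<alpha>" .
      moreover have "x^m/fact m \<ge> 0" using x by simp
      ultimately show ?thesis by (simp add: ennreal_mult'[symmetric])
    qed
    finally show "integral\<^sup>N lborel (g m) = ennreal (x^m / pochhammer (\<alpha>+1) m / \<alpha>)" .
  qed
  also have "\<dots> = ennreal (\<Sum>m. x^m / pochhammer (\<alpha>+1) m / \<alpha>)"
    using a x by (intro suminf_ennreal2 summable_divide kummer_summable) (auto intro!: divide_nonneg_nonneg pochhammer_nonneg mult_nonneg_nonneg)
  also have "(\<Sum>m. x^m / pochhammer (\<alpha>+1) m / \<alpha>) = kummer1F1 1 (\<alpha>+1) x / \<alpha>"
    unfolding kummer_eq using a x by (intro suminf_divide kummer_summable) auto
  finally show ?thesis .
qed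

lemma sphere_nn:
  fixes g :: "'a::euclidean_space \<Rightarrow> real"
  assumes gm[measurable]: "g \<in> borel_measurable borel" and g0: "\<And>b. g b \<ge> 0"
    and gM: "\<And>b. norm b \<le> \<bar>r\<bar> \<Longrightarrow> g b \<le> M"
  shows "ennreal (\<integral>b. g b \<partial>sphere_measure r) = ennreal (1 / unit_ball_vol DIM('a)) *
           (\<integral>\<^sup>+x. indicator (ball 0 1) x * ennreal (g (r *\<^sub>R sgn x)) \<partial>lborel)"
proof -
  define V where "V = unit_ball_vol (real DIM('a))"
  have V: "V > 0" by (simp add: V_def)
  define I where "I = (\<integral>\<^sup>+x. ennreal (g (r *\<^sub>R sgn x)) * indicator (ball 0 1) x \<partial>lborel)"
  have "(\<integral>b. g b \<partial>sphere_measure r) = (\<integral>x. g (r *\<^sub>R sgn x) \<partial>uniform_measure lborel (ball (0::'a) 1))"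
    unfolding sphere_measure_def by (rule integral_distr) measurable
  also have "\<dots> = enn2real (\<integral>\<^sup>+x. ennreal (g (r *\<^sub>R sgn x)) \<partial>uniform_measure lborel (ball (0::'a) 1))"
    by (rule integral_eq_nn_integral) (auto simp: g0)
  also have "(\<integral>\<^sup>+x. ennreal (g (r *\<^sub>R sgn x)) \<partial>uniform_measure lborel (ball (0::'a) 1)) = I / ennreal V"
    unfolding I_def by (subst nn_integral_uniform_measure) (auto simp: ball_vol V_def)
  finally have e: "(\<integral>b. g b \<partial>sphere_measure r) = enn2real (I / ennreal V)" .
  have M0: "M \<ge> 0" using gM[of 0] g0[of 0] by simp
  have "I \<le> (\<integral>\<^sup>+x. ennreal M * indicator (ball 0 1) (x::'a) \<partial>lborel)"
    unfolding I_def
  proof (intro nn_integral_mono)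
    fix x :: 'a
    have "norm (r *\<^sub>R sgn x) \<le> \<bar>r\<bar>" by (simp add: norm_sgn mult_left_le)
    then have "g (r *\<^sub>R sgn x) \<le> M" by (rule gM)
    then show "ennreal (g (r *\<^sub>R sgn x)) * indicator (ball 0 1) x \<le> ennreal M * indicator (ball 0 1) x"
      by (auto simp: indicator_def intro: ennreal_leI)
  qed
  also have "\<dots> = ennreal M * ennreal V"
    by (simp add: nn_integral_cmult_indicator ball_vol V_def)
  finally have Ifin: "I < top" by (simp add: ennreal_mult_less_top le_less_trans)
  define i where "i = enn2real I"
  have Ii: "I = ennreal i" and i0: "i \<ge> 0" using Ifin by (auto simp: i_def)
  have "ennreal (enn2real (I / ennreal V)) = ennreal (i / V)"
    unfolding Ii using V i0 by (simp add: divide_ennreal)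
  also have "\<dots> = ennreal (1 / V) * I"
    unfolding Ii using V i0 by (simp add: ennreal_mult'[symmetric])
  finally show ?thesis unfolding e I_def V_def by (simp add: mult.commute)
qed

lemma tricomi_nn:
  assumes a: "\<alpha> > 0" and s: "s > 0" and e: "b - \<alpha> - 1 \<le> 0"
  shows "ennreal (tricomiU \<alpha> b s * Gamma \<alpha>) =
    (\<integral>\<^sup>+t. indicator {0<..} t * ennreal (exp (-s*t) * t powr (\<alpha>-1) * (1+t) powr (b-\<alpha>-1)) \<partial>lborel)"
proof -
  have G: "Gamma \<alpha> > 0" using a by (simp add: Gamma_real_pos)
  define J where "J = (\<integral>\<^sup>+t. indicator {0<..} t * ennreal (exp (-s*t) * t powr (\<alpha>-1) * (1+t) powr (b-\<alpha>-1)) \<partial>lborel)"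
  have "tricomiU \<alpha> b s * Gamma \<alpha> = (LBINT t:{0<..}. exp (- s * t) * t powr (\<alpha> - 1) * (1 + t) powr (b - \<alpha> - 1))"
    using G by (simp add: tricomiU_def)
  also have "\<dots> = enn2real (\<integral>\<^sup>+t. ennreal (indicator {0<..} t *\<^sub>R (exp (- s * t) * t powr (\<alpha> - 1) * (1 + t) powr (b - \<alpha> - 1))) \<partial>lborel)"
    unfolding set_lebesgue_integral_def by (rule integral_eq_nn_integral) auto
  also have "(\<integral>\<^sup>+t. ennreal (indicator {0<..} t *\<^sub>R (exp (- s * t) * t powr (\<alpha> - 1) * (1 + t) powr (b - \<alpha> - 1))) \<partial>lborel) = J"
    unfolding J_def by (intro nn_integral_cong) (simp add: indicator_def)
  finally have T: "tricomiU \<alpha> b s * Gamma \<alpha> = enn2real J" .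
  have "J \<le> (\<integral>\<^sup>+t. indicator {0<..} t * ennreal (t powr (\<alpha>-1) * exp (-s*t)) \<partial>lborel)"
    unfolding J_def
  proof (intro nn_integral_mono)
    fix t :: real
    show "indicator {0<..} t * ennreal (exp (-s*t) * t powr (\<alpha>-1) * (1+t) powr (b-\<alpha>-1))
        \<le> indicator {0<..} t * ennreal (t powr (\<alpha>-1) * exp (-s*t))"
    proof (cases "t > 0")
      case True
      have "(1+t) powr (b-\<alpha>-1) \<le> 1" using powr_mono[of "b-\<alpha>-1" 0 "1+t"] True e by simp
      then have "exp (-s*t) * t powr (\<alpha>-1) * (1+t) powr (b-\<alpha>-1) \<le> t powr (\<alpha>-1) * exp (-s*t)"
        by (simp add: mult_left_le mult.commute)
      then show ?thesis using True by (simp add: ennreal_leI)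
    qed simp
  qed
  also have "\<dots> = ennreal (Gamma \<alpha> / s powr \<alpha>)" by (rule gamma_scaled[OF a s])
  finally have "J < top" by (simp add: le_less_trans)
  then show ?thesis unfolding T J_def by simp
qed

lemma meas_tricomi[measurable]: "(\<lambda>s. tricomiU \<alpha> b s) \<in> borel_measurable borel"
  unfolding tricomiU_def set_lebesgue_integral_def by measurable

lemma gauss_F:
  fixes \<beta> :: "'a::euclidean_space"
  assumes N: "N > 0" and t: "t > 0" and C0: "C0 \<ge> 0"
  shows "(\<integral>\<^sup>+y. ennreal (C0 * exp (- (N*(1+t)/2) * norm y ^ 2 + (N *\<^sub>R \<beta>) \<bullet> y)) \<partial>lborel)
    = ennreal (C0 * exp ((N * norm \<beta> ^ 2 / 2) / (1+t)) * (N*(1+t)/2) powr (- real DIM('a)/2)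
         * unit_ball_vol (real DIM('a)) * Gamma (real DIM('a)/2 + 1))"
proof -
  define A where "A = N*(1+t)/2"
  have A: "A > 0" using N t by (simp add: A_def)
  have "(\<integral>\<^sup>+y. ennreal (C0 * exp (- A * norm y ^ 2 + (N *\<^sub>R \<beta>) \<bullet> y)) \<partial>lborel)
      = (\<integral>\<^sup>+y. ennreal C0 * ennreal (exp (- A * norm y ^ 2 + (N *\<^sub>R \<beta>) \<bullet> y)) \<partial>lborel)"
    using C0 by (intro nn_integral_cong) (simp add: ennreal_mult)
  also have "\<dots> = ennreal C0 * (\<integral>\<^sup>+y. ennreal (exp (- A * norm y ^ 2 + (N *\<^sub>R \<beta>) \<bullet> y)) \<partial>lborel)"
    by (rule nn_integral_cmult) measurable
  also have "\<dots> = ennreal C0 * (ennreal (exp (norm (N *\<^sub>R \<beta>) ^ 2 / (4*A)) * (1 / sqrt A) ^ DIM('a)) *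
      ennreal (unit_ball_vol (real DIM('a)) * Gamma (real DIM('a)/2 + 1)))"
    by (simp only: gauss[OF A] Z_val)
  also have "\<dots> = ennreal (C0 * exp ((N * norm \<beta> ^ 2 / 2) / (1+t)) * A powr (- real DIM('a)/2)
         * unit_ball_vol (real DIM('a)) * Gamma (real DIM('a)/2 + 1))"
  proof -
    have e1: "norm (N *\<^sub>R \<beta>) ^ 2 / (4*A) = (N * norm \<beta> ^ 2 / 2) / (1+t)"
    proof -
      have n: "norm (N *\<^sub>R \<beta>) ^ 2 = N^2 * norm \<beta> ^ 2" using N by (simp add: power_mult_distrib)
      have "4*A = 2 * N * (1+t)" by (simp add: A_def)
      then have "norm (N *\<^sub>R \<beta>) ^ 2 / (4*A) = N^2 * norm \<beta> ^ 2 / (2 * N * (1+t))" unfolding n by simp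
      also have "\<dots> = (N * norm \<beta> ^ 2 / 2) / (1+t)" using N t by (simp add: power2_eq_square)
      finally show ?thesis .
    qed
    have e2: "(1 / sqrt A) ^ DIM('a) = A powr (- real DIM('a)/2)"
      using A by (simp add: powr_minus powr_realpow[symmetric] powr_powr sqrt_def root_powr_inverse
                     powr_divide divide_inverse[symmetric] field_simps)
    have p: "Gamma (real DIM('a)/2 + 1) > 0" by (intro Gamma_real_pos) simp
    show ?thesis unfolding e1 e2 using C0 A p
      by (simp add: ennreal_mult'[symmetric] ennreal_mult[symmetric] mult_ac)
  qed
  finally show ?thesis by (simp add: A_def)
qed

lemma polar1:
  fixes F :: "'a::euclidean_space \<Rightarrow> ennreal"
  assumes [measurable]: "F \<in> borel_measurable borel"
  shows "(\<integral>\<^sup>+y. F y \<partial>lborel) = (\<integral>\<^sup>+\<rho>. indicator {0<..} \<rho> * ennreal (real DIM('a) * \<rho> powr (real DIM('a) - 1)) *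
            (\<integral>\<^sup>+x. indicator (ball 0 1) x * F (\<rho> *\<^sub>R sgn x) \<partial>lborel) \<partial>lborel)"
proof -
  have "(\<integral>\<^sup>+y. F y \<partial>lborel) = (\<integral>\<^sup>+\<rho>. indicator {0<..} \<rho> * ennreal (real DIM('a) / 1 * \<rho> powr (real DIM('a) / 1 - 1)) *
            (\<integral>\<^sup>+x. indicator (ball 0 1) x * F (\<rho> powr (1/1) *\<^sub>R sgn x) \<partial>lborel) \<partial>lborel)"
    by (rule polar) auto
  also have "\<dots> = (\<integral>\<^sup>+\<rho>. indicator {0<..} \<rho> * ennreal (real DIM('a) * \<rho> powr (real DIM('a) - 1)) *
            (\<integral>\<^sup>+x. indicator (ball 0 1) x * F (\<rho> *\<^sub>R sgn x) \<partial>lborel) \<partial>lborel)"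
    by (intro nn_integral_cong) (auto simp: indicator_def)
  finally show ?thesis .
qed

lemma tricomi_nonneg: "\<alpha> > 0 \<Longrightarrow> tricomiU \<alpha> b s \<ge> 0"
  unfolding tricomiU_def set_lebesgue_integral_def
  by (intro divide_nonneg_nonneg integral_nonneg) (auto simp: indicator_def Gamma_real_pos less_imp_le)

lemma core:
  fixes \<beta> :: "'a::euclidean_space" and C0 N a :: real
  assumes a: "a > 2" and N: "N > 0" and C0: "C0 \<ge> 0"
  shows "(LBINT r:{0<..}. (\<integral>b. C0 * exp (-(N/2) * norm b ^ 2 + N * (\<beta> \<bullet> b)) \<partial>sphere_measure r) *
      (Gamma ((a + real DIM('a))/2 - 1) / Gamma (real DIM('a)/2) * ((a-2)/r) * (N*r^2/2) powr (real DIM('a)/2)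
        * tricomiU ((a + real DIM('a) - 2)/2) (real DIM('a)/2) (N*r^2/2)))
   = C0 * ((a-2)/(real DIM('a) + a - 2)) * kummer1F1 1 ((real DIM('a) + a)/2) (N * norm \<beta> ^ 2 / 2)"
proof -
  define K where "K = real DIM('a)"
  define g where "g b = C0 * exp (-(N/2) * norm b ^ 2 + N * (\<beta> \<bullet> b))" for b
  define \<alpha> where "\<alpha> = (a+K-2)/2"
  define pg where "pg r = Gamma ((a+K)/2 - 1)/Gamma (K/2) * ((a-2)/r) * (N*r^2/2) powr (K/2) * tricomiU \<alpha> (K/2) (N*r^2/2)" for r
  define V where "V = unit_ball_vol K"
  define E where "E r = (\<integral>\<^sup>+x. indicator (ball 0 1) x * ennreal (g (r *\<^sub>R sgn (x::'a))) \<partial>lborel)" for r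
  define P1 where "P1 = (a-2)/Gamma(K/2) * (N/2) powr (K/2)"
  define x0 where "x0 = N * norm \<beta> ^ 2 / 2"
  define w where "w t = t powr (\<alpha>-1) * (1+t) powr (K/2-\<alpha>-1)" for t :: real
  have K1: "K \<ge> 1" by (simp add: K_def DIM_positive)
  have al: "\<alpha> > 0" using a K1 by (simp add: \<alpha>_def)
  have al2: "(a+K)/2 - 1 = \<alpha>" by (simp add: \<alpha>_def field_simps)
  have V: "V > 0" by (simp add: V_def K_def)
  have GK: "Gamma (K/2) > 0" using K1 by (intro Gamma_real_pos) simp
  have Ga: "Gamma \<alpha> > 0" using al by (rule Gamma_real_pos)
  have P1: "P1 \<ge> 0" using a GK N by (simp add: P1_def)
  have x0: "x0 \<ge> 0" using N by (simp add: x0_def)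
  have gm[measurable]: "g \<in> borel_measurable borel" unfolding g_def by measurable
  have g0: "g b \<ge> 0" for b using C0 by (simp add: g_def)
  have gM: "g b \<le> C0 * exp (N * norm \<beta> * \<bar>r\<bar>)" if "norm b \<le> \<bar>r\<bar>" for b r
  proof -
    have "\<beta> \<bullet> b \<le> norm \<beta> * norm b" by (rule norm_cauchy_schwarz)
    also have "\<dots> \<le> norm \<beta> * \<bar>r\<bar>" using that by (simp add: mult_left_mono)
    finally have le: "\<beta> \<bullet> b \<le> norm \<beta> * \<bar>r\<bar>" .
    have 1: "N * (\<beta> \<bullet> b) \<le> N * (norm \<beta> * \<bar>r\<bar>)" using N le by (intro mult_left_mono) auto
    have 2: "-(N/2) * norm b ^ 2 \<le> 0" using N by simp
    have 3: "N * norm \<beta> * \<bar>r\<bar> = N * (norm \<beta> * \<bar>r\<bar>)" by simp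
    have "-(N/2) * norm b ^ 2 + N * (\<beta> \<bullet> b) \<le> N * norm \<beta> * \<bar>r\<bar>"
      using 1 2 3 by linarith
    then show ?thesis unfolding g_def using C0 by (intro mult_left_mono) auto
  qed
  have sph: "ennreal (\<integral>b. g b \<partial>sphere_measure r) = ennreal (1/V) * E r" for r
    unfolding E_def V_def K_def by (rule sphere_nn[OF gm g0 gM])
  have int0: "(\<integral>b. g b \<partial>sphere_measure r) \<ge> 0" for r
    by (simp add: g0)
  have intE: "(\<integral>b. g b \<partial>sphere_measure r) = enn2real (ennreal (1/V) * E r)" for r
    using sph[of r] int0[of r] by (metis enn2real_ennreal)
  have pg0: "pg r \<ge> 0" if "r > 0" for r
    unfolding pg_def using that a GK al by (intro mult_nonneg_nonneg tricomi_nonneg divide_nonneg_nonneg) (auto simp: al2 Gamma_real_pos less_imp_le)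
  have pgnn: "ennreal (pg r) = ennreal (P1 * r powr (K-1)) *
      (\<integral>\<^sup>+t. indicator {0<..} t * ennreal (exp (-(N*r^2/2)*t) * t powr (\<alpha>-1) * (1+t) powr (K/2-\<alpha>-1)) \<partial>lborel)"
    if r: "r > 0" for r
  proof -
    have s: "N*r^2/2 > 0" using N r by simp
    have e: "K/2 - \<alpha> - 1 \<le> 0" using a by (simp add: \<alpha>_def field_simps)
    have pw: "(N*r^2/2) powr (K/2) = (N/2) powr (K/2) * r powr K"
    proof -
      have e0: "N*r^2/2 = (N/2) * r^2" by simp
      have "(N*r^2/2) powr (K/2) = (N/2) powr (K/2) * (r^2) powr (K/2)"
        unfolding e0 using N by (intro powr_mult)
      also have "(r^2) powr (K/2) = r powr K"
      proof -
        have "(r^2) powr (K/2) = (r powr 2) powr (K/2)" using r by (simp add: powr_realpow)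
        also have "\<dots> = r powr K" by (simp add: powr_powr)
        finally show ?thesis .
      qed
      finally show ?thesis .
    qed
    have rr: "r powr K / r = r powr (K-1)" using r by (simp add: powr_diff)
    have "pg r = Gamma \<alpha> / Gamma (K/2) * ((a-2)/r) * ((N/2) powr (K/2) * r powr K) * tricomiU \<alpha> (K/2) (N*r^2/2)"
      unfolding pg_def al2 pw ..
    also have "\<dots> = ((a-2)/Gamma(K/2) * (N/2) powr (K/2)) * (r powr K / r) * (tricomiU \<alpha> (K/2) (N*r^2/2) * Gamma \<alpha>)"
      by (simp only: divide_inverse mult_ac)
    finally have eq: "pg r = P1 * r powr (K-1) * (tricomiU \<alpha> (K/2) (N*r^2/2) * Gamma \<alpha>)"
      unfolding P1_def rr .
    have "ennreal (pg r) = ennreal (P1 * r powr (K-1)) * ennreal (tricomiU \<alpha> (K/2) (N*r^2/2) * Gamma \<alpha>)"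
      unfolding eq by (rule ennreal_mult') (use P1 in simp)
    then show ?thesis by (simp only: tricomi_nn[OF al s e])
  qed
  define h where "h r = (\<integral>b. g b \<partial>sphere_measure r) * pg r" for r
  have hm: "(\<lambda>r. indicator {0<..} r *\<^sub>R h r) \<in> borel_measurable lborel"
    unfolding h_def intE E_def pg_def by measurable
  have "(LBINT r:{0<..}. h r) = enn2real (\<integral>\<^sup>+r. ennreal (indicator {0<..} r *\<^sub>R h r) \<partial>lborel)"
    unfolding set_lebesgue_integral_def
    by (rule integral_eq_nn_integral[OF hm]) (auto simp: indicator_def h_def int0 pg0)
  moreover have "(\<integral>\<^sup>+r. ennreal (indicator {0<..} r *\<^sub>R h r) \<partial>lborel) = ennreal (C0 * (a-2)/2 * (kummer1F1 1 (\<alpha>+1) x0 / \<alpha>))"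
  proof -
    define \<Phi> where "\<Phi> r t = ennreal (P1/V) * (indicator {0<..} r * ennreal (r powr (K-1)) * E r) *
        (indicator {0<..} t * ennreal (w t * exp (-(N*r^2/2)*t)))" for r t :: real
    have \<Phi>m: "(\<lambda>(r,t). \<Phi> r t) \<in> borel_measurable (borel \<Otimes>\<^sub>M borel)"
      unfolding \<Phi>_def E_def w_def by measurable
    have S1: "(\<integral>\<^sup>+r. ennreal (indicator {0<..} r *\<^sub>R h r) \<partial>lborel) = (\<integral>\<^sup>+r. \<integral>\<^sup>+t. \<Phi> r t \<partial>lborel \<partial>lborel)"
    proof (intro nn_integral_cong)
      fix r :: real
      show "ennreal (indicator {0<..} r *\<^sub>R h r) = (\<integral>\<^sup>+t. \<Phi> r t \<partial>lborel)"
      proof (cases "r > 0")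
        case True
        let ?X = "\<lambda>t. indicator {0<..} t * ennreal (exp (-(N*r^2/2)*t) * t powr (\<alpha>-1) * (1+t) powr (K/2-\<alpha>-1))"
        have "ennreal (indicator {0<..} r *\<^sub>R h r) = ennreal (\<integral>b. g b \<partial>sphere_measure r) * ennreal (pg r)"
          using True int0[of r] pg0[OF True] by (simp add: h_def ennreal_mult)
        also have "\<dots> = ennreal (1/V) * E r * (ennreal (P1 * r powr (K-1)) * (\<integral>\<^sup>+t. ?X t \<partial>lborel))"
          by (simp only: sph pgnn[OF True])
        also have "\<dots> = (ennreal (1/V) * E r * ennreal (P1 * r powr (K-1))) * (\<integral>\<^sup>+t. ?X t \<partial>lborel)"
          by (simp only: mult.assoc)
        also have "\<dots> = (\<integral>\<^sup>+t. (ennreal (1/V) * E r * ennreal (P1 * r powr (K-1))) * ?X t \<partial>lborel)"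
          by (rule nn_integral_cmult[symmetric]) measurable
        also have "\<dots> = (\<integral>\<^sup>+t. \<Phi> r t \<partial>lborel)"
        proof (intro nn_integral_cong)
          fix t :: real
          have c1: "ennreal (1/V) * ennreal (P1 * r powr (K-1)) = ennreal (P1/V) * ennreal (r powr (K-1))"
            using V P1 by (simp add: ennreal_mult[symmetric])
          have c2: "exp (-(N*r^2/2)*t) * t powr (\<alpha>-1) * (1+t) powr (K/2-\<alpha>-1) = w t * exp (-(N*r^2/2)*t)"
            by (simp add: w_def mult_ac)
          have "(ennreal (1/V) * E r * ennreal (P1 * r powr (K-1))) * ?X t
              = (ennreal (1/V) * ennreal (P1 * r powr (K-1))) * E r * ?X t" by (simp only: mult_ac)
          also have "\<dots> = \<Phi> r t" unfolding c1 \<Phi>_def c2 using True by (simp only: mult_ac indicator_simps greaterThan_iff if_True mult_1)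
          finally show "(ennreal (1/V) * E r * ennreal (P1 * r powr (K-1))) * ?X t = \<Phi> r t" .
        qed
        finally show ?thesis .
      qed (simp add: \<Phi>_def)
    qed
    also have "\<dots> = (\<integral>\<^sup>+t. \<integral>\<^sup>+r. \<Phi> r t \<partial>lborel \<partial>lborel)"
      by (rule lborel_swap[OF \<Phi>m])
    also have "\<dots> = (\<integral>\<^sup>+t. ennreal (C0*(a-2)/2) * (indicator {0<..} t *
         ennreal (t powr (\<alpha>-1) * (1+t) powr (-(\<alpha>+1)) * exp (x0/(1+t)))) \<partial>lborel)"
    proof (intro nn_integral_cong)
      fix t :: real
      show "(\<integral>\<^sup>+r. \<Phi> r t \<partial>lborel) = ennreal (C0*(a-2)/2) * (indicator {0<..} t *
         ennreal (t powr (\<alpha>-1) * (1+t) powr (-(\<alpha>+1)) * exp (x0/(1+t))))"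
      proof (cases "t > 0")
        case True
        define F where "F y = ennreal (C0 * exp (- (N*(1+t)/2) * norm y ^ 2 + (N *\<^sub>R \<beta>) \<bullet> y))" for y :: 'a
        have Fm[measurable]: "F \<in> borel_measurable borel" unfolding F_def by measurable
        have EF: "E r * ennreal (exp (-(N*r^2/2)*t)) = (\<integral>\<^sup>+x. indicator (ball 0 1) x * F (r *\<^sub>R sgn x) \<partial>lborel)"
          if r: "r > 0" for r
        proof -
          have "E r * ennreal (exp (-(N*r^2/2)*t)) = (\<integral>\<^sup>+x. indicator (ball 0 1) x * ennreal (g (r *\<^sub>R sgn (x::'a))) * ennreal (exp (-(N*r^2/2)*t)) \<partial>lborel)"
            unfolding E_def by (rule nn_integral_multc[symmetric]) measurable
          also have "\<dots> = (\<integral>\<^sup>+x. indicator (ball 0 1) x * F (r *\<^sub>R sgn x) \<partial>lborel)"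
          proof (intro nn_integral_cong_AE eventually_mono[OF AE_lborel_singleton[of 0]])
            fix x :: 'a assume x: "x \<noteq> 0"
            have nv: "norm (r *\<^sub>R sgn x) ^ 2 = r^2" using x r by (simp add: norm_sgn)
            have "g (r *\<^sub>R sgn x) * exp (-(N*r^2/2)*t) = C0 * exp (- (N*(1+t)/2) * norm (r *\<^sub>R sgn x) ^ 2 + (N *\<^sub>R \<beta>) \<bullet> (r *\<^sub>R sgn x))"
              unfolding g_def nv by (simp add: exp_add[symmetric] algebra_simps)
            then show "indicator (ball 0 1) x * ennreal (g (r *\<^sub>R sgn x)) * ennreal (exp (-(N*r^2/2)*t)) = indicator (ball 0 1) x * F (r *\<^sub>R sgn x)"
              unfolding F_def using g0 by (simp add: mult.assoc ennreal_mult[symmetric])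
          qed
          finally show ?thesis .
        qed
        define c where "c = P1/V * w t / K"
        have c0: "c \<ge> 0" using P1 V K1 True by (simp add: c_def w_def)
        have "(\<integral>\<^sup>+r. \<Phi> r t \<partial>lborel) = (\<integral>\<^sup>+r. ennreal c * (indicator {0<..} r * ennreal (K * r powr (K-1)) *
              (\<integral>\<^sup>+x. indicator (ball 0 1) x * F (r *\<^sub>R sgn x) \<partial>lborel)) \<partial>lborel)"
        proof (intro nn_integral_cong)
          fix r :: real
          show "\<Phi> r t = ennreal c * (indicator {0<..} r * ennreal (K * r powr (K-1)) *
              (\<integral>\<^sup>+x. indicator (ball 0 1) x * F (r *\<^sub>R sgn x) \<partial>lborel))"
          proof (cases "r > 0")
            case r: True
            have "\<Phi> r t = ennreal (P1/V) * ennreal (r powr (K-1)) * ennreal (w t) * (E r * ennreal (exp (-(N*r^2/2)*t)))"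
              unfolding \<Phi>_def using r True by (simp add: ennreal_mult w_def mult_ac)
            also have "ennreal (P1/V) * ennreal (r powr (K-1)) * ennreal (w t) = ennreal c * ennreal (K * r powr (K-1))"
              using P1 V K1 True r by (simp add: c_def w_def ennreal_mult[symmetric] field_simps)
            finally show ?thesis unfolding EF[OF r] using r by (simp add: mult_ac)
          qed (simp add: \<Phi>_def)
        qed
        also have "\<dots> = ennreal c * (\<integral>\<^sup>+y. F y \<partial>lborel)"
          by (subst nn_integral_cmult) (measurable, simp only: polar1[OF Fm, symmetric] K_def)
        also have "(\<integral>\<^sup>+y. F y \<partial>lborel) = ennreal (C0 * exp (x0 / (1+t)) * (N*(1+t)/2) powr (- K/2) * V * Gamma (K/2 + 1))"
          unfolding F_def x0_def K_def V_def by (rule gauss_F[OF N True C0])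
        also have "ennreal c * \<dots> = ennreal (C0*(a-2)/2) * (indicator {0<..} t *
           ennreal (t powr (\<alpha>-1) * (1+t) powr (-(\<alpha>+1)) * exp (x0/(1+t))))"
        proof -
          define Np where "Np = (N/2) powr (K/2)"
          define Tp where "Tp = (1+t) powr (K/2)"
          define Q where "Q = (1+t) powr (-(\<alpha>+1))"
          define G where "G = Gamma (K/2)"
          have Np: "Np > 0" using N by (simp add: Np_def)
          have Tp: "Tp > 0" using True by (simp add: Tp_def)
          have G: "G > 0" using GK by (simp add: G_def)
          have e1: "(N*(1+t)/2) powr (- K/2) = 1 / (Np * Tp)"
          proof -
            have "(N*(1+t)/2) powr (- K/2) = ((N/2) * (1+t)) powr (- K/2)" by (simp add: mult_ac)
            also have "\<dots> = (N/2) powr (- K/2) * (1+t) powr (- K/2)" using N True by (intro powr_mult)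
            also have "\<dots> = 1 / (Np * Tp)" by (simp add: Np_def Tp_def powr_minus_divide)
            finally show ?thesis .
          qed
          have e2: "(1+t) powr (K/2-\<alpha>-1) = Q * Tp"
            unfolding Q_def Tp_def by (subst powr_add[symmetric]) (simp add: algebra_simps)
          have e3: "Gamma (K/2 + 1) = K/2 * G"
            unfolding G_def by (rule Gamma_plus1) (use K1 in \<open>auto dest: nonpos_Ints_nonpos\<close>)
          have R: "c * (C0 * exp (x0 / (1+t)) * (N*(1+t)/2) powr (- K/2) * V * Gamma (K/2 + 1))
              = C0*(a-2)/2 * (t powr (\<alpha>-1) * Q * exp (x0/(1+t)))"
            unfolding c_def P1_def w_def e1 e2 e3 Np_def[symmetric] G_def[symmetric]
            using Np Tp G V K1 by (simp add: field_simps)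
          have "ennreal c * ennreal (C0 * exp (x0 / (1+t)) * (N*(1+t)/2) powr (- K/2) * V * Gamma (K/2 + 1))
              = ennreal (c * (C0 * exp (x0 / (1+t)) * (N*(1+t)/2) powr (- K/2) * V * Gamma (K/2 + 1)))"
            by (rule ennreal_mult'[OF c0, symmetric])
          also have "\<dots> = ennreal (C0*(a-2)/2 * (t powr (\<alpha>-1) * Q * exp (x0/(1+t))))"
            by (simp only: R)
          also have "\<dots> = ennreal (C0*(a-2)/2) * ennreal (t powr (\<alpha>-1) * Q * exp (x0/(1+t)))"
            by (rule ennreal_mult') (use C0 a in simp)
          also have "\<dots> = ennreal (C0*(a-2)/2) * (indicator {0<..} t *
             ennreal (t powr (\<alpha>-1) * (1+t) powr (-(\<alpha>+1)) * exp (x0/(1+t))))"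
            using True by (simp add: Q_def)
          finally show ?thesis .
        qed
        finally show ?thesis .
      qed (simp add: \<Phi>_def)
    qed
    also have "\<dots> = ennreal (C0*(a-2)/2) * ennreal (kummer1F1 1 (\<alpha>+1) x0 / \<alpha>)"
      by (subst nn_integral_cmult) (measurable, simp only: t_integral[OF al x0])
    also have "\<dots> = ennreal (C0 * (a-2)/2 * (kummer1F1 1 (\<alpha>+1) x0 / \<alpha>))"
      by (rule ennreal_mult'[symmetric]) (use C0 a in simp)
    finally show ?thesis .
  qed
  ultimately have L: "(LBINT r:{0<..}. h r) = C0 * (a-2)/2 * (kummer1F1 1 (\<alpha>+1) x0 / \<alpha>)"
  proof -
    assume A1: "(LBINT r:{0<..}. h r) = enn2real (\<integral>\<^sup>+r. ennreal (indicator {0<..} r *\<^sub>R h r) \<partial>lborel)"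
      and A2: "(\<integral>\<^sup>+r. ennreal (indicator {0<..} r *\<^sub>R h r) \<partial>lborel) = ennreal (C0 * (a-2)/2 * (kummer1F1 1 (\<alpha>+1) x0 / \<alpha>))"
    have k0: "kummer1F1 1 (\<alpha>+1) x0 \<ge> 0"
      unfolding kummer_eq using al x0
      by (intro suminf_nonneg kummer_summable) (auto intro!: divide_nonneg_nonneg pochhammer_nonneg)
    have "C0 * (a-2)/2 * (kummer1F1 1 (\<alpha>+1) x0 / \<alpha>) \<ge> 0" using C0 a k0 al by simp
    then show ?thesis unfolding A1 A2 by simp
  qed
  have R: "C0 * (a-2)/2 * (kummer1F1 1 (\<alpha>+1) x0 / \<alpha>) = C0 * ((a-2)/(K+a-2)) * kummer1F1 1 ((K+a)/2) (N*norm \<beta>^2/2)"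
  proof -
    have e1: "\<alpha>+1 = (K+a)/2" by (simp add: \<alpha>_def field_simps)
    have e2: "K + a - 2 = 2 * \<alpha>" by (simp add: \<alpha>_def)
    show ?thesis unfolding e1 e2 x0_def using al by simp
  qed
  have "(LBINT r:{0<..}. h r) = C0 * ((a-2)/(K+a-2)) * kummer1F1 1 ((K+a)/2) (N*norm \<beta>^2/2)"
    using L R by simp
  then show ?thesis unfolding h_def g_def pg_def \<alpha>_def K_def .
qed


theorem mainTheorem12:
  fixes \<sigma> y :: "real^'n" and Xr :: "real^'k^'n"
    and S :: "real^'k^'k" and l :: "real^'k" and a :: real
  assumes "a > 2"
    and "\<forall>n. \<sigma> $ n > 0"
    and "rank (scaledX \<sigma> Xr) = CARD('k)"
    and "orthogonal_matrix S"
    and "Hmat \<sigma> Xr = S ** diagm l ** transpose S"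
  shows "(LBINT r:{0<..}. lik_r \<sigma> y Xr S l r * pg' a CARD('k) CARD('n) r) =
    Csigma \<sigma> * exp (- real CARD('n) * zsq_mean \<sigma> y / 2)
      * ((a - 2) / (real CARD('k) + a - 2))
      * kummer1F1 1 ((real CARD('k) + a) / 2)
          (real CARD('n) * (norm (bhat \<sigma> y Xr S l))\<^sup>2 / 2)"
proof -
  define N where "N = real CARD('n)"
  define C0 where "C0 = Csigma \<sigma> * exp (- real CARD('n) * zsq_mean \<sigma> y / 2)"
  define \<beta> where "\<beta> = bhat \<sigma> y Xr S l"
  have dimk: "DIM((real,'k) vec) = CARD('k)" by simp
  have C0: "C0 \<ge> 0" unfolding C0_def Csigma_def by (intro mult_nonneg_nonneg prod_nonneg) auto
  have N: "N > 0" by (simp add: N_def)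
  have likeq: "lik \<sigma> y Xr S l = (\<lambda>b. C0 * exp (-(N/2) * norm b ^ 2 + N * (\<beta> \<bullet> b)))"
  proof (rule ext)
    fix b :: "real^'k"
    have "- (N / 2) * (zsq_mean \<sigma> y + (norm b)\<^sup>2 - 2 * (\<beta> \<bullet> b))
        = - N * zsq_mean \<sigma> y / 2 + (-(N/2) * norm b ^ 2 + N * (\<beta> \<bullet> b))"
      by (simp add: algebra_simps)
    note eq = this
    have "lik \<sigma> y Xr S l b = Csigma \<sigma> * exp (- (N / 2) * (zsq_mean \<sigma> y + (norm b)\<^sup>2 - 2 * (\<beta> \<bullet> b)))"
      unfolding lik_def N_def \<beta>_def ..
    also have "\<dots> = Csigma \<sigma> * (exp (- N * zsq_mean \<sigma> y / 2) * exp (-(N/2) * norm b ^ 2 + N * (\<beta> \<bullet> b)))"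
      unfolding eq exp_add ..
    also have "\<dots> = C0 * exp (-(N/2) * norm b ^ 2 + N * (\<beta> \<bullet> b))"
      unfolding C0_def N_def by (simp only: mult.assoc)
    finally show "lik \<sigma> y Xr S l b = C0 * exp (-(N/2) * norm b ^ 2 + N * (\<beta> \<bullet> b))" .
  qed
  have X: "(LBINT r:{0<..}. (\<integral>b. C0 * exp (-(N/2) * norm b ^ 2 + N * (\<beta> \<bullet> b)) \<partial>sphere_measure r) *
      (Gamma ((a + real DIM((real,'k) vec))/2 - 1) / Gamma (real DIM((real,'k) vec)/2) * ((a-2)/r) * (N*r^2/2) powr (real DIM((real,'k) vec)/2)
        * tricomiU ((a + real DIM((real,'k) vec) - 2)/2) (real DIM((real,'k) vec)/2) (N*r^2/2)))
   = C0 * ((a-2)/(real DIM((real,'k) vec) + a - 2)) * kummer1F1 1 ((real DIM((real,'k) vec) + a)/2) (N * norm \<beta> ^ 2 / 2)"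
    by (rule core[OF assms(1) N C0])
  show ?thesis
    using X unfolding dimk lik_r_def likeq pg'_def N_def C0_def \<beta>_def .
qed

end
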